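(* Let $\mathbf L\in\mathbb R_+^{n\times k}$. Let $\mathbf p\in\operatorname{relint}(\Delta_n)$ and $c\in\mathbb R_+$ be such that $\mathbf p^\top\boldsymbol\ell_t=c$ for all $t\in[k]$. Then for every $t\in[k]$, \[ \mu_{\mathcal Q^{\mathbf L}_t}(\mathbf p)\le n-\operatorname{affdim}(\mathbf L). \]
   Context: Notation: $[m]=\{1,\dots,m\}$; $\Delta_n=\{\mathbf p\in\mathbb R_+^n:\sum_i p_i=1\}$, with relative interior the points having all entries strictly positive. A loss matrix $\mathbf L\in\mathbb R_+^{n\times k}$ has columns $\boldsymbol\ell_t$; $\operatorname{affdim}(\mathbf L)$ is the dimension of the affine hull of $\{\boldsymbol\ell_1,\dots,\boldsymbol\ell_k\}$. Trigger probability set: $\mathcal Q^{\mathbf L}_t=\{\mathbf p\in\Delta_n: t\in\operatorname{argmin}_{t'\in[k]}\mathbf p^\top\boldsymbol\ell_{t'}\}$. For a convex set $\mathcal Q\subseteq\mathbb R^n$ and $\mathbf p\in\mathcal Q$, $\mathcal F_{\mathcal Q}(\mathbf p)=\{\mathbf v:\exists\epsilon_0>0,\ \mathbf p+\epsilon\mathbf v\in\mathcal Q\ \forall\epsilon\in(0,\epsilon_0)\}$ and $\mu_{\mathcal Q}(\mathbf p)=\dim(\mathcal F_{\mathcal Q}(\mathbf p)\cap(-\mathcal F_{\mathcal Q}(\mathbf p)))$. *)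

theory Defs
  imports "HOL-Analysis.Analysis"
begin

definition prob_simplex :: "(real ^ 'n) set" where
  "prob_simplex = {p. (\<forall>i. 0 \<le> p $ i) \<and> (\<Sum>i\<in>UNIV. p $ i) = 1}"

definition prob_simplex_relint :: "(real ^ 'n) set" where
  "prob_simplex_relint = {p. (\<forall>i. 0 < p $ i) \<and> (\<Sum>i\<in>UNIV. p $ i) = 1}"

definition trigger_set :: "real ^ 'k ^ 'n \<Rightarrow> 'k \<Rightarrow> (real ^ 'n) set" where
  "trigger_set L t = {p \<in> prob_simplex. \<forall>t'. p \<bullet> column t L \<le> p \<bullet> column t' L}"

definition feasible_dirs :: "('a::real_vector) set \<Rightarrow> 'a \<Rightarrow> 'a set" where
  "feasible_dirs Q p = {v. \<exists>e0>0. \<forall>e. 0 < e \<and> e < e0 \<longrightarrow> p + e *\<^sub>R v \<in> Q}"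

definition mu :: "('a::euclidean_space) set \<Rightarrow> 'a \<Rightarrow> nat" where
  "mu Q p = dim (feasible_dirs Q p \<inter> uminus ` feasible_dirs Q p)"

end

theory Submission
  imports Defs
begin

theorem mainTheorem13:
  fixes L :: "real ^ 'k ^ 'n" and p :: "real ^ 'n" and c :: real
  assumes "\<forall>i j. 0 \<le> L $ i $ j"
    and "p \<in> prob_simplex_relint"
    and "0 \<le> c"
    and "\<forall>t. p \<bullet> column t L = c"
  shows "\<forall>t. int (mu (trigger_set L t) p) \<le> int CARD('n) - aff_dim (range (\<lambda>t. column t L))"
proof
  fix t
  define D where "D = (\<lambda>x. x - column t L) ` range (\<lambda>t. column t L)"
  have aff: "aff_dim (range (\<lambda>t. column t L)) = int (dim D)"
    unfolding D_def by (rule aff_dim_eq_dim_subtract) (simp add: hull_inc)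
  define Q where "Q = trigger_set L t"
  have key: "v \<bullet> column t L \<le> v \<bullet> column t' L" if "v \<in> feasible_dirs Q p" for v t'
  proof -
    from that obtain e0 where e0: "e0 > 0" "\<forall>e. 0 < e \<and> e < e0 \<longrightarrow> p + e *\<^sub>R v \<in> Q"
      unfolding feasible_dirs_def by blast
    have "p + (e0/2) *\<^sub>R v \<in> Q" using e0 by auto
    hence "(p + (e0/2) *\<^sub>R v) \<bullet> column t L \<le> (p + (e0/2) *\<^sub>R v) \<bullet> column t' L"
      unfolding Q_def trigger_set_def by blast
    hence "c + (e0/2) * (v \<bullet> column t L) \<le> c + (e0/2) * (v \<bullet> column t' L)"
      using assms(4) by (simp add: inner_add_left)
    thus ?thesis using e0 by (simp add: mult_le_cancel_left_pos)
  qed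
  define S where "S = feasible_dirs Q p \<inter> uminus ` feasible_dirs Q p"
  have sub: "S \<subseteq> {y \<in> UNIV. \<forall>x \<in> span D. orthogonal x y}"
  proof safe
    fix v x assume v: "v \<in> S" and x: "x \<in> span D"
    have v1: "v \<in> feasible_dirs Q p" and v2: "- v \<in> feasible_dirs Q p"
      using v unfolding S_def by auto
    have "orthogonal v x"
    proof (rule orthogonal_to_span[OF x])
      fix y assume "y \<in> D"
      then obtain t' where y: "y = column t' L - column t L" unfolding D_def by auto
      have "v \<bullet> column t L \<le> v \<bullet> column t' L" using key[OF v1] .
      moreover have "(-v) \<bullet> column t L \<le> (-v) \<bullet> column t' L" using key[OF v2] .
      ultimately show "orthogonal v y" unfolding y orthogonal_def by (simp add: inner_diff_right)
    qed
    thus "orthogonal x v" by (simp add: orthogonal_commute)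
  qed simp
  have "dim {y \<in> UNIV. \<forall>x \<in> span D. orthogonal x y} + dim (span D) = dim (UNIV :: (real^'n) set)"
    by (rule dim_subspace_orthogonal_to_vectors) auto
  hence "dim S + dim D \<le> CARD('n)"
    using dim_subset[OF sub] by simp
  thus "int (mu (trigger_set L t) p) \<le> int CARD('n) - aff_dim (range (\<lambda>t. column t L))"
    unfolding aff mu_def S_def[symmetric] Q_def[symmetric] by simp
qed

end
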